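(* Let $\varphi$ be a $\mathrm{THT}_1$ formula having some equilibrium model. Then $\varphi$ has an equilibrium model which is strongly ultimately periodic and of size at most $2+2^{|\varphi|}$.
   Context: Fix a finite set $P$ of atomic propositions. THT formulas over $P$ are given by $\varphi ::= p \mid \bot \mid \varphi\vee\varphi \mid \varphi\wedge\varphi \mid \varphi\rightarrow\varphi \mid \mathsf{X}\varphi \mid \varphi\,\mathsf{U}\,\varphi \mid \varphi\,\mathsf{R}\,\varphi$, with $\neg\varphi:=\varphi\rightarrow\bot$. The modalities $\mathsf F\varphi:=\top\,\mathsf U\,\varphi$ and $\mathsf G\varphi:=\bot\,\mathsf R\,\varphi$ are also allowed. A THT interpretation is a pair $M=(H,T)$ of infinite words over $2^P$ with $H(i)\subseteq T(i)$ for all $i$; write $M(i)=(H(i),T(i))$; $M$ is total if $H=T$. Satisfaction $M,i\models\varphi$ is defined by: - $M,i\not\models\bot$; - $M,i\models p$ iff $p\in H(i)$; - $\vee$ and $\wedge$ are interpreted as usual; - $M,i\models\varphi\rightarrow\psi$ iff for both $H'\in\{H,T\}$, either $(H',T),i\not\models\varphi$ or $(H',T),i\models\psi$; - $\mathsf X,\mathsf U,\mathsf R$ have their usual LTL clauses evaluated in $M$. $M\models\varphi$ means $M,0\models\varphi$. An equilibrium model of $\varphi$ is a total $(T,T)\models\varphi$ such that $(H,T)\not\models\varphi$ for every $H$ with $H(i)\subseteq T(i)$ for all $i$ and $H\ne T$. $\mathrm{THT}_1$ is the set of THT formulas in which no temporal modality ($\mathsf X,\mathsf U,\mathsf R,\mathsf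 F,\mathsf G$) occurs within the scope of another. $|\varphi|$ is the number of distinct subformulas of $\varphi$. An interpretation $M$ is strongly ultimately periodic if there is $i\ge 0$ with $M(k)=M(i)$ for all $k\ge i$. Its size is $j+1$, where $j$ is the smallest such $i$. *)

theory Defs
  imports Main
begin

datatype 'p tht =
    Atom 'p
  | Bot
  | Or "'p tht" "'p tht"
  | And "'p tht" "'p tht"
  | Imp "'p tht" "'p tht"
  | Next "'p tht"
  | Until "'p tht" "'p tht"
  | Release "'p tht" "'p tht"

definition Neg :: "'p tht \<Rightarrow> 'p tht" where "Neg \<phi> = Imp \<phi> Bot"
definition Top :: "'p tht" where "Top = Imp Bot Bot"
definition Fin :: "'p tht \<Rightarrow> 'p tht" where "Fin \<phi> = Until Top \<phi>"
definition Glob :: "'p tht \<Rightarrow> 'p tht" where "Glob \<phi> = Release Bot \<phi>"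

type_synonym 'p trace = "nat \<Rightarrow> 'p set"

primrec sat :: "'p trace \<Rightarrow> 'p trace \<Rightarrow> nat \<Rightarrow> 'p tht \<Rightarrow> bool" where
  "sat H T i (Atom p) = (p \<in> H i)"
| "sat H T i Bot = False"
| "sat H T i (Or \<phi> \<psi>) = (sat H T i \<phi> \<or> sat H T i \<psi>)"
| "sat H T i (And \<phi> \<psi>) = (sat H T i \<phi> \<and> sat H T i \<psi>)"
| "sat H T i (Imp \<phi> \<psi>) =
     ((\<not> sat H T i \<phi> \<or> sat H T i \<psi>) \<and> (\<not> sat T T i \<phi> \<or> sat T T i \<psi>))"
| "sat H T i (Next \<phi>) = sat H T (Suc i) \<phi>"
| "sat H T i (Until \<phi> \<psi>) =
     (\<exists>j\<ge>i. sat H T j \<psi> \<and> (\<forall>k. i \<le> k \<and> k < j \<longrightarrow> sat H T k \<phi>))"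
| "sat H T i (Release \<phi> \<psi>) =
     (\<forall>j\<ge>i. sat H T j \<psi> \<or> (\<exists>k. i \<le> k \<and> k < j \<and> sat H T k \<phi>))"

definition tht_interp :: "'p trace \<Rightarrow> 'p trace \<Rightarrow> bool" where
  "tht_interp H T \<longleftrightarrow> (\<forall>i. H i \<subseteq> T i)"

definition equilibrium_model :: "'p tht \<Rightarrow> 'p trace \<Rightarrow> bool" where
  "equilibrium_model \<phi> T \<longleftrightarrow>
     sat T T 0 \<phi> \<and> (\<forall>H. tht_interp H T \<and> H \<noteq> T \<longrightarrow> \<not> sat H T 0 \<phi>)"

primrec tdepth :: "'p tht \<Rightarrow> nat" where
  "tdepth (Atom p) = 0"
| "tdepth Bot = 0"
| "tdepth (Or \<phi> \<psi>) = max (tdepth \<phi>) (tdepth \<psi>)"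
| "tdepth (And \<phi> \<psi>) = max (tdepth \<phi>) (tdepth \<psi>)"
| "tdepth (Imp \<phi> \<psi>) = max (tdepth \<phi>) (tdepth \<psi>)"
| "tdepth (Next \<phi>) = Suc (tdepth \<phi>)"
| "tdepth (Until \<phi> \<psi>) = Suc (max (tdepth \<phi>) (tdepth \<psi>))"
| "tdepth (Release \<phi> \<psi>) = Suc (max (tdepth \<phi>) (tdepth \<psi>))"

definition THT1 :: "'p tht \<Rightarrow> bool" where
  "THT1 \<phi> \<longleftrightarrow> tdepth \<phi> \<le> 1"

primrec subformulas :: "'p tht \<Rightarrow> 'p tht set" where
  "subformulas (Atom p) = {Atom p}"
| "subformulas Bot = {Bot}"
| "subformulas (Or \<phi> \<psi>) = insert (Or \<phi> \<psi>) (subformulas \<phi> \<union> subformulas \<psi>)"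
| "subformulas (And \<phi> \<psi>) = insert (And \<phi> \<psi>) (subformulas \<phi> \<union> subformulas \<psi>)"
| "subformulas (Imp \<phi> \<psi>) = insert (Imp \<phi> \<psi>) (subformulas \<phi> \<union> subformulas \<psi>)"
| "subformulas (Next \<phi>) = insert (Next \<phi>) (subformulas \<phi>)"
| "subformulas (Until \<phi> \<psi>) = insert (Until \<phi> \<psi>) (subformulas \<phi> \<union> subformulas \<psi>)"
| "subformulas (Release \<phi> \<psi>) = insert (Release \<phi> \<psi>) (subformulas \<phi> \<union> subformulas \<psi>)"

definition fsize :: "'p tht \<Rightarrow> nat" where
  "fsize \<phi> = card (subformulas \<phi>)"

definition strongly_ult_periodic :: "'p trace \<Rightarrow> 'p trace \<Rightarrow> bool" where
  "strongly_ult_periodic H T \<longleftrightarrow> (\<exists>i. \<forall>k\<ge>i. (H k, T k) = (H i, T i))"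

definition sup_size :: "'p trace \<Rightarrow> 'p trace \<Rightarrow> nat" where
  "sup_size H T = (LEAST j. \<forall>k\<ge>j. (H k, T k) = (H j, T j)) + 1"

end

theory Submission
  imports Defs "HOL-Library.Infinite_Set"
begin

lemma sat_local:
  "tdepth \<psi> = 0 \<Longrightarrow> H i = H2 j \<Longrightarrow> T i = T2 j \<Longrightarrow> sat H T i \<psi> = sat H2 T2 j \<psi>"
  by (induction \<psi> arbitrary: H H2) auto

lemma sat_atoms:
  "(\<forall>p j. Atom p \<in> subformulas \<phi> \<longrightarrow> (p \<in> H j \<longleftrightarrow> p \<in> H2 j) \<and> (p \<in> T j \<longleftrightarrow> p \<in> T2 j))
   \<Longrightarrow> sat H T i \<phi> = sat H2 T2 i \<phi>"
proof (induction \<phi> arbitrary: H H2 i)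
  case (Imp a b)
  have ha: "\<And>i. sat H T i a = sat H2 T2 i a" "\<And>i. sat T T i a = sat T2 T2 i a"
    using Imp.IH(1) Imp.prems by auto
  have hb: "\<And>i. sat H T i b = sat H2 T2 i b" "\<And>i. sat T T i b = sat T2 T2 i b"
    using Imp.IH(2) Imp.prems by auto
  show ?case using ha hb by simp
next
  case (Until a b)
  have ha: "\<And>i. sat H T i a = sat H2 T2 i a" using Until.IH(1) Until.prems by auto
  have hb: "\<And>i. sat H T i b = sat H2 T2 i b" using Until.IH(2) Until.prems by auto
  show ?case using ha hb by simp
next
  case (Release a b)
  have ha: "\<And>i. sat H T i a = sat H2 T2 i a" using Release.IH(1) Release.prems by auto
  have hb: "\<And>i. sat H T i b = sat H2 T2 i b" using Release.IH(2) Release.prems by auto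
  show ?case using ha hb by simp
next
  case (Or a b)
  have ha: "\<And>i. sat H T i a = sat H2 T2 i a" using Or.IH(1) Or.prems by auto
  have hb: "\<And>i. sat H T i b = sat H2 T2 i b" using Or.IH(2) Or.prems by auto
  show ?case using ha hb by simp
next
  case (And a b)
  have ha: "\<And>i. sat H T i a = sat H2 T2 i a" using And.IH(1) And.prems by auto
  have hb: "\<And>i. sat H T i b = sat H2 T2 i b" using And.IH(2) And.prems by auto
  show ?case using ha hb by simp
next
  case (Next a)
  have ha: "\<And>i. sat H T i a = sat H2 T2 i a" using Next.IH Next.prems by auto
  show ?case using ha by simp
qed auto

lemma transfer:
  assumes sm: "strict_mono f" and f0: "f 0 = 0" and f1: "f 1 = 1"
  shows "tdepth \<phi> \<le> 1 \<Longrightarrow> (\<forall>n. \<exists>i. f i \<le> n \<and> H n = H (f i) \<and> T n = T (f i))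
         \<Longrightarrow> sat H T 0 \<phi> = sat (\<lambda>n. H (f n)) (\<lambda>n. T (f n)) 0 \<phi>"
proof (induction \<phi> arbitrary: H T)
  case (Atom x)
  then show ?case using f0 by simp
next
  case Bot
  then show ?case by simp
next
  case (Or a b)
  then show ?case by simp
next
  case (And a b)
  then show ?case by simp
next
  case (Imp a b)
  have DT: "\<forall>n. \<exists>i. f i \<le> n \<and> T n = T (f i) \<and> T n = T (f i)" using Imp.prems(2) by blast
  have "sat H T 0 a = sat (\<lambda>n. H (f n)) (\<lambda>n. T (f n)) 0 a" "sat T T 0 a = sat (\<lambda>n. T (f n)) (\<lambda>n. T (f n)) 0 a"
       "sat H T 0 b = sat (\<lambda>n. H (f n)) (\<lambda>n. T (f n)) 0 b" "sat T T 0 b = sat (\<lambda>n. T (f n)) (\<lambda>n. T (f n)) 0 b"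
    using Imp.IH Imp.prems DT by auto
  then show ?case by simp
next
  case (Next a)
  then have "tdepth a = 0" by simp
  then show ?case using f1 sat_local[of a H 1 "\<lambda>n. H (f n)" 1 T "\<lambda>n. T (f n)"] by simp
next
  case (Until a b)
  have da: "tdepth a = 0" and db: "tdepth b = 0" using Until.prems(1) by auto
  have D: "\<forall>n. \<exists>i. f i \<le> n \<and> H n = H (f i) \<and> T n = T (f i)" by (fact Until.prems(2))
  have rg: "\<And>i c. tdepth c = 0 \<Longrightarrow> sat H T (f i) c = sat (\<lambda>n. H (f n)) (\<lambda>n. T (f n)) i c"
    by (rule sat_local) auto
  have desc: "\<And>n. \<exists>i. f i \<le> n \<and> sat H T n a = sat H T (f i) a \<and> sat H T n b = sat H T (f i) b"
  proof -
    fix n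
    obtain i where "f i \<le> n" "H n = H (f i)" "T n = T (f i)" using D by blast
    then show "?thesis n" using sat_local[OF da, of H n H "f i" T T] sat_local[OF db, of H n H "f i" T T]
      by blast
  qed
  have "(\<exists>j. sat H T j b \<and> (\<forall>k<j. sat H T k a)) = (\<exists>j. sat (\<lambda>n. H (f n)) (\<lambda>n. T (f n)) j b \<and> (\<forall>k<j. sat (\<lambda>n. H (f n)) (\<lambda>n. T (f n)) k a))"
  proof
    assume "\<exists>j. sat H T j b \<and> (\<forall>k<j. sat H T k a)"
    then obtain j where j: "sat H T j b" "\<forall>k<j. sat H T k a" by blast
    obtain i where i: "f i \<le> j" "sat H T j b = sat H T (f i) b" using desc by blast
    have "sat (\<lambda>n. H (f n)) (\<lambda>n. T (f n)) i b" using i j rg[OF db, symmetric] by simp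
    moreover have "\<forall>k<i. sat (\<lambda>n. H (f n)) (\<lambda>n. T (f n)) k a"
    proof (intro allI impI)
      fix k assume "k < i"
      then have "f k < j" using i(1) sm strict_mono_less by (metis order_less_le_trans)
      then show "sat (\<lambda>n. H (f n)) (\<lambda>n. T (f n)) k a" using j rg[OF da, symmetric] by simp
    qed
    ultimately show "\<exists>j. sat (\<lambda>n. H (f n)) (\<lambda>n. T (f n)) j b \<and> (\<forall>k<j. sat (\<lambda>n. H (f n)) (\<lambda>n. T (f n)) k a)" by blast
  next
    assume "\<exists>j. sat (\<lambda>n. H (f n)) (\<lambda>n. T (f n)) j b \<and> (\<forall>k<j. sat (\<lambda>n. H (f n)) (\<lambda>n. T (f n)) k a)"
    then obtain i where i: "sat (\<lambda>n. H (f n)) (\<lambda>n. T (f n)) i b" "\<forall>k<i. sat (\<lambda>n. H (f n)) (\<lambda>n. T (f n)) k a" by blast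
    have "sat H T (f i) b" using i rg[OF db, symmetric] by simp
    moreover have "\<forall>k<f i. sat H T k a"
    proof (intro allI impI)
      fix k assume k: "k < f i"
      obtain m where m: "f m \<le> k" "sat H T k a = sat H T (f m) a" using desc by blast
      have "m < i" using m(1) k sm strict_mono_less by (metis order_le_less_trans)
      then show "sat H T k a" using i m rg[OF da, symmetric] by simp
    qed
    ultimately show "\<exists>j. sat H T j b \<and> (\<forall>k<j. sat H T k a)" by blast
  qed
  then show ?case by simp
next
  case (Release a b)
  have da: "tdepth a = 0" and db: "tdepth b = 0" using Release.prems(1) by auto
  have D: "\<forall>n. \<exists>i. f i \<le> n \<and> H n = H (f i) \<and> T n = T (f i)" by (fact Release.prems(2))
  have rg: "\<And>i c. tdepth c = 0 \<Longrightarrow> sat H T (f i) c = sat (\<lambda>n. H (f n)) (\<lambda>n. T (f n)) i c"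
    by (rule sat_local) auto
  have desc: "\<And>n. \<exists>i. f i \<le> n \<and> sat H T n a = sat H T (f i) a \<and> sat H T n b = sat H T (f i) b"
  proof -
    fix n
    obtain i where "f i \<le> n" "H n = H (f i)" "T n = T (f i)" using D by blast
    then show "?thesis n" using sat_local[OF da, of H n H "f i" T T] sat_local[OF db, of H n H "f i" T T]
      by blast
  qed
  have "(\<forall>j. sat H T j b \<or> (\<exists>k<j. sat H T k a)) = (\<forall>j. sat (\<lambda>n. H (f n)) (\<lambda>n. T (f n)) j b \<or> (\<exists>k<j. sat (\<lambda>n. H (f n)) (\<lambda>n. T (f n)) k a))"
  proof
    assume A: "\<forall>j. sat H T j b \<or> (\<exists>k<j. sat H T k a)"
    show "\<forall>j. sat (\<lambda>n. H (f n)) (\<lambda>n. T (f n)) j b \<or> (\<exists>k<j. sat (\<lambda>n. H (f n)) (\<lambda>n. T (f n)) k a)"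
    proof
      fix i
      show "sat (\<lambda>n. H (f n)) (\<lambda>n. T (f n)) i b \<or> (\<exists>k<i. sat (\<lambda>n. H (f n)) (\<lambda>n. T (f n)) k a)"
      proof (cases "sat H T (f i) b")
        case True
        then show ?thesis using rg[OF db, symmetric] by simp
      next
        case False
        then obtain k where k: "k < f i" "sat H T k a" using A by blast
        obtain m where m: "f m \<le> k" "sat H T k a = sat H T (f m) a" using desc by blast
        have "m < i" using m(1) k sm strict_mono_less by (metis order_le_less_trans)
        then show ?thesis using k m rg[OF da, symmetric] by auto
      qed
    qed
  next
    assume A: "\<forall>j. sat (\<lambda>n. H (f n)) (\<lambda>n. T (f n)) j b \<or> (\<exists>k<j. sat (\<lambda>n. H (f n)) (\<lambda>n. T (f n)) k a)"
    show "\<forall>j. sat H T j b \<or> (\<exists>k<j. sat H T k a)"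
    proof
      fix j
      obtain i where i: "f i \<le> j" "sat H T j b = sat H T (f i) b" using desc by blast
      show "sat H T j b \<or> (\<exists>k<j. sat H T k a)"
      proof (cases "sat (\<lambda>n. H (f n)) (\<lambda>n. T (f n)) i b")
        case True
        then show ?thesis using i rg[OF db, symmetric] by simp
      next
        case False
        then obtain m where m: "m < i" "sat (\<lambda>n. H (f n)) (\<lambda>n. T (f n)) m a" using A by blast
        have "f m < j" using m(1) i(1) sm strict_mono_less by (metis order_less_le_trans)
        then show ?thesis using m rg[OF da, symmetric] by auto
      qed
    qed
  qed
  then show ?case by simp
qed

lemma finite_subformulas: "finite (subformulas \<phi>)"
  by (induction \<phi>) auto

theorem mainTheorem4:
  fixes \<phi> :: "'p::finite tht"
  assumes "THT1 \<phi>"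
    and "\<exists>T. equilibrium_model \<phi> T"
  shows "\<exists>T. equilibrium_model \<phi> T \<and> strongly_ult_periodic T T
             \<and> sup_size T T \<le> 2 + 2 ^ fsize \<phi>"
proof -
  have dep: "tdepth \<phi> \<le> 1" using assms(1) unfolding THT1_def .
  obtain T0 where eq0: "equilibrium_model \<phi> T0" using assms(2) by blast
  define A where "A = {p. Atom p \<in> subformulas \<phi>}"
  define T where "T = (\<lambda>n. T0 n \<inter> A)"
  have agree: "\<And>H H2 T1 T2. (\<And>p j. p \<in> A \<Longrightarrow> (p \<in> H j \<longleftrightarrow> p \<in> H2 j) \<and> (p \<in> T1 j \<longleftrightarrow> p \<in> T2 j))
      \<Longrightarrow> sat H T1 0 \<phi> = sat H2 T2 0 \<phi>"
    by (rule sat_atoms) (auto simp: A_def)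
  have eqT: "equilibrium_model \<phi> T"
    unfolding equilibrium_model_def
  proof (intro conjI allI impI)
    show "sat T T 0 \<phi>" using agree[of T T0 T T0] eq0 unfolding T_def equilibrium_model_def by auto
    fix H assume HT: "tht_interp H T \<and> H \<noteq> T"
    define H2 where "H2 = (\<lambda>n. H n \<union> (T0 n - A))"
    have i2: "tht_interp H2 T0" using HT unfolding tht_interp_def H2_def T_def by auto
    have "H2 \<noteq> T0"
    proof
      assume "H2 = T0"
      have "H = T"
      proof
        fix j
        have "H j \<subseteq> T j" using HT unfolding tht_interp_def by auto
        then have "H j = H2 j \<inter> A" unfolding H2_def T_def by auto
        then show "H j = T j" using \<open>H2 = T0\<close> unfolding T_def by simp
      qed
      then show False using HT by simp
    qed
    then have "\<not> sat H2 T0 0 \<phi>" using eq0 i2 unfolding equilibrium_model_def by blast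
    moreover have "sat H2 T0 0 \<phi> = sat H T 0 \<phi>"
      by (rule agree) (auto simp: H2_def T_def)
    ultimately show "\<not> sat H T 0 \<phi>" by simp
  qed
  have TA: "\<And>n. T n \<subseteq> A" unfolding T_def by auto
  have finA: "finite A"
  proof -
    have "Atom ` A \<subseteq> subformulas \<phi>" unfolding A_def by auto
    then have "finite (Atom ` A)" using finite_subformulas finite_subset by blast
    moreover have "inj_on Atom A" by (simp add: inj_on_def)
    ultimately show ?thesis by (rule finite_imageD)
  qed
  have cardA: "card A \<le> fsize \<phi>"
  proof -
    have "Atom ` A \<subseteq> subformulas \<phi>" unfolding A_def by auto
    then have "card (Atom ` A) \<le> fsize \<phi>" unfolding fsize_def using finite_subformulas card_mono by blast
    moreover have "card (Atom ` A) = card A" by (rule card_image) (auto simp: inj_on_def)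
    ultimately show ?thesis by simp
  qed
  have finrT: "finite (range T)"
  proof -
    have "range T \<subseteq> Pow A" using TA by auto
    moreover have "finite (Pow A)" using finA by simp
    ultimately show ?thesis by (rule finite_subset)
  qed
  obtain c where infc: "infinite (T -` {c})"
    using inf_img_fin_dom[OF finrT] by blast
  define G where "G = {n. \<forall>m<n. T m \<noteq> T n}"
  have injG: "inj_on T G"
  proof (rule inj_onI)
    fix x y assume "x \<in> G" "y \<in> G" "T x = T y"
    then show "x = y" unfolding G_def by (cases x y rule: linorder_cases) auto
  qed
  have TG: "T ` G \<subseteq> Pow A" using TA by auto
  have finG: "finite G"
  proof -
    have "finite (T ` G)" using TG finA by (simp add: finite_subset)
    then show ?thesis using injG by (rule finite_imageD)
  qed
  have cardG: "card G \<le> 2 ^ card A"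
  proof -
    have "card G = card (T ` G)" using injG by (simp add: card_image)
    also have "\<dots> \<le> card (Pow A)" using TG finA by (simp add: card_mono)
    also have "\<dots> = 2 ^ card A" using finA by (simp add: card_Pow)
    finally show ?thesis .
  qed
  define F where "F = insert 1 G"
  have finF: "finite F" using finG F_def by simp
  have cardF: "card F \<le> Suc (card G)" unfolding F_def using finG by (simp add: card_insert_le_m1 card_insert_if)
  define N where "N = Suc (Max F)"
  have FN: "\<And>n. n \<in> F \<Longrightarrow> n < N" unfolding N_def using finF by (simp add: le_imp_less_Suc)
  define R where "R = F \<union> {n. N \<le> n \<and> T n = c}"
  have infR: "infinite R"
  proof -
    have "T -` {c} - {..<N} \<subseteq> R" unfolding R_def by auto
    moreover have "infinite (T -` {c} - {..<N})" using infc by simp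
    ultimately show ?thesis using infinite_super by blast
  qed
  define f where "f = Infinite_Set.enumerate R"
  have sm: "strict_mono f" unfolding f_def using strict_mono_enumerate[OF infR] .
  have rf: "range f = R" unfolding f_def using range_enumerate[OF infR] .
  have "0 \<in> G" unfolding G_def by simp
  then have "0 \<in> R" unfolding R_def F_def by simp
  then obtain j0 where "f j0 = 0" using rf by (metis rangeE)
  then have f0: "f 0 = 0" using sm by (metis le0 le_zero_eq strict_mono_less_eq)
  have "1 \<in> R" unfolding R_def F_def by simp
  then obtain j1 where j1: "f j1 = 1" using rf by (metis rangeE)
  have "j1 \<noteq> 0"
  proof
    assume "j1 = 0"
    then show False using j1 f0 by simp
  qed
  then have "f 1 \<le> 1" using j1 sm by (metis One_nat_def Suc_leI neq0_conv strict_mono_less_eq)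
  moreover have "f 0 < f 1" using sm by (simp add: strict_mono_less)
  ultimately have f1: "f 1 = 1" using f0 by simp
  have DT: "\<forall>n. \<exists>i. f i \<le> n \<and> T n = T (f i)"
  proof
    fix n
    define m where "m = (LEAST m. T m = T n)"
    have Tm: "T m = T n" unfolding m_def by (rule LeastI) simp
    have mn: "m \<le> n" unfolding m_def by (rule Least_le) simp
    have "m \<in> G" unfolding G_def using Tm m_def not_less_Least by fastforce
    then have "m \<in> range f" using rf R_def F_def by simp
    then obtain i where "f i = m" by blast
    then show "\<exists>i. f i \<le> n \<and> T n = T (f i)" using Tm mn by auto
  qed
  define T' where "T' = (\<lambda>n. T (f n))"
  have satT': "sat T' T' 0 \<phi>"
  proof -
    have "sat T T 0 \<phi> = sat T' T' 0 \<phi>" unfolding T'_def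
      by (rule transfer[OF sm f0 f1 dep]) (use DT in blast)
    then show ?thesis using eqT unfolding equilibrium_model_def by simp
  qed
  have minT': "\<forall>H'. tht_interp H' T' \<and> H' \<noteq> T' \<longrightarrow> \<not> sat H' T' 0 \<phi>"
  proof (intro allI impI)
    fix H' assume H': "tht_interp H' T' \<and> H' \<noteq> T'"
    define g where "g = (\<lambda>n. SOME i. f i \<le> n \<and> T n = T (f i))"
    have g: "\<And>n. f (g n) \<le> n \<and> T n = T (f (g n))"
      unfolding g_def using DT by (metis (mono_tags, lifting) someI_ex)
    have injf: "inj f" using sm strict_mono_imp_inj_on by blast
    define H where "H = (\<lambda>n. if n \<in> range f then H' (inv f n) else H' (g n))"
    have Hf: "\<And>i. H (f i) = H' i" unfolding H_def using injf by simp
    have DH: "\<forall>n. \<exists>i. f i \<le> n \<and> H n = H (f i) \<and> T n = T (f i)"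
    proof
      fix n
      show "\<exists>i. f i \<le> n \<and> H n = H (f i) \<and> T n = T (f i)"
      proof (cases "n \<in> range f")
        case True
        then obtain i where "n = f i" by blast
        then show ?thesis by auto
      next
        case False
        then show ?thesis using g[of n] Hf[of "g n"] unfolding H_def by auto
      qed
    qed
    have HT: "tht_interp H T" unfolding tht_interp_def
    proof
      fix n
      show "H n \<subseteq> T n"
      proof (cases "n \<in> range f")
        case True
        then obtain i where "n = f i" by blast
        then show ?thesis using Hf H' unfolding tht_interp_def T'_def by auto
      next
        case False
        then show ?thesis using g[of n] H' unfolding H_def tht_interp_def T'_def by auto
      qed
    qed
    have "H \<noteq> T"
    proof
      assume "H = T"
      then have "H' = T'" unfolding T'_def using Hf by (metis ext)
      then show False using H' by simp
    qed
    then have ns: "\<not> sat H T 0 \<phi>" using eqT HT unfolding equilibrium_model_def by blast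
    have "sat H T 0 \<phi> = sat (\<lambda>n. H (f n)) (\<lambda>n. T (f n)) 0 \<phi>"
      by (rule transfer[OF sm f0 f1 dep DH])
    moreover have "(\<lambda>n. H (f n)) = H'" using Hf by auto
    ultimately show "\<not> sat H' T' 0 \<phi>" using ns unfolding T'_def by simp
  qed
  have tail: "\<And>k. card F \<le> k \<Longrightarrow> T' k = c"
  proof -
    fix k assume k: "card F \<le> k"
    have "N \<le> f k"
    proof (rule ccontr)
      assume "\<not> N \<le> f k"
      then have lt: "f k < N" by simp
      have "f ` {..k} \<subseteq> F"
      proof
        fix x assume "x \<in> f ` {..k}"
        then obtain j where j: "j \<le> k" "x = f j" by auto
        then have "x \<le> f k" using sm by (simp add: strict_mono_less_eq)
        then have "x < N" using lt by simp
        moreover have "x \<in> R" using rf j by auto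
        ultimately show "x \<in> F" unfolding R_def by auto
      qed
      then have "card (f ` {..k}) \<le> card F" using finF card_mono by blast
      moreover have "card (f ` {..k}) = Suc k"
      proof -
        have "inj_on f {..k}" using sm strict_mono_imp_inj_on by blast
        then show ?thesis by (simp add: card_image)
      qed
      ultimately show False using k by simp
    qed
    moreover have "f k \<in> R" using rf by auto
    ultimately show "T' k = c" unfolding R_def T'_def using FN by fastforce
  qed
  have per: "\<forall>k\<ge>card F. (T' k, T' k) = (T' (card F), T' (card F))" using tail by simp
  have "strongly_ult_periodic T' T'" unfolding strongly_ult_periodic_def using per by blast
  moreover have "sup_size T' T' \<le> 2 + 2 ^ fsize \<phi>"
  proof -
    have "(LEAST j. \<forall>k\<ge>j. (T' k, T' k) = (T' j, T' j)) \<le> card F"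
      by (rule Least_le) (use per in blast)
    moreover have "(2::nat) ^ card A \<le> 2 ^ fsize \<phi>" using cardA by (simp add: power_increasing)
    ultimately show ?thesis unfolding sup_size_def using cardF cardG by linarith
  qed
  moreover have "equilibrium_model \<phi> T'"
    unfolding equilibrium_model_def using satT' minT' by blast
  ultimately show ?thesis by blast
qed

end
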